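(* Let $F$ satisfy (A1) on $Q_1=B_1(0)\times(-1,1)$, and let $u\in C(Q_1)$ be a viscosity solution of $$F(x,t,D^2u)-\partial_tu=f\quad\text{in }\{u>0\},$$ where $f\ge c_0>0$. Then for every $(z,s)\in\overline{\{u>0\}}$ and every $r>0$ with $Q_r(z,s)\subset Q_1$, $$\sup_{(x,t)\in\partial_pQ^-_r(z,s)}u(x,t)\ge\mu_0r^2+u(z,s),\qquad \mu_0=\min\Big(\frac{c_0}{2},\frac{c_0}{4n\Lambda}\Big).$$
   Context: (A1): $F(x,t,M)$ is uniformly elliptic with constants $0<\lambda\le\Lambda$, i.e. $\lambda\|P\|\le F(x,t,M+P)-F(x,t,M)\le\Lambda\|P\|$ for every nonnegative definite symmetric $P$ ($\|P\|$ its largest eigenvalue); $F$ is concave, $C^{1,\alpha}$ in $M$, $C^{1,\alpha}_{\mathrm{loc}}$ in $(x,t)$, and $F(\cdot,\cdot,0)=0$. $Q_r(z,s)=B_r(z)\times(s-r^2,s+r^2)$, $Q^-_r(z,s)=B_r(z)\times(s-r^2,s]$, and $\partial_pQ^-_r(z,s)=(\partial B_r(z)\times[s-r^2,s])\cup(B_r(z)\times\{s-r^2\})$ is its parabolic boundary. *)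

theory Defs
  imports "HOL-Analysis.Analysis"
begin

type_synonym 'n pt = "(real ^ 'n) \<times> real"
type_synonym 'n mat = "real ^ 'n ^ 'n"

definition Sym :: "'n::finite mat set" where
  "Sym = {M. transpose M = M}"

definition nonneg_def :: "'n::finite mat \<Rightarrow> bool" where
  "nonneg_def P \<longleftrightarrow> P \<in> Sym \<and> (\<forall>v. 0 \<le> v \<bullet> (P *v v))"

definition max_eig :: "'n::finite mat \<Rightarrow> real" where
  "max_eig P = Max {\<mu>. \<exists>v. v \<noteq> 0 \<and> P *v v = \<mu> *\<^sub>R v}"

definition Qcyl :: "real \<Rightarrow> 'n::finite pt \<Rightarrow> 'n pt set" where
  "Qcyl r zs = ball (fst zs) r \<times> {snd zs - r^2 <..< snd zs + r^2}"

definition Qminus :: "real \<Rightarrow> 'n::finite pt \<Rightarrow> 'n pt set" where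
  "Qminus r zs = ball (fst zs) r \<times> {snd zs - r^2 <.. snd zs}"

definition par_bdry :: "real \<Rightarrow> 'n::finite pt \<Rightarrow> 'n pt set" where
  "par_bdry r zs = (sphere (fst zs) r \<times> {snd zs - r^2 .. snd zs})
                   \<union> (ball (fst zs) r \<times> {snd zs - r^2})"

definition Q1 :: "'n::finite pt set" where
  "Q1 = Qcyl 1 (0, 0)"

definition A1 :: "'n::finite pt set \<Rightarrow> real \<Rightarrow> real \<Rightarrow> real \<Rightarrow>
                  (real ^ 'n \<Rightarrow> real \<Rightarrow> 'n mat \<Rightarrow> real) \<Rightarrow> bool" where
  "A1 U lam Lam \<alpha> F \<longleftrightarrow>
     0 < lam \<and> lam \<le> Lam \<and> 0 < \<alpha> \<and> \<alpha> < 1 \<and>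
     \<comment> \<open>uniform ellipticity\<close>
     (\<forall>x t M P. (x, t) \<in> U \<and> M \<in> Sym \<and> nonneg_def P \<longrightarrow>
        lam * max_eig P \<le> F x t (M + P) - F x t M \<and>
        F x t (M + P) - F x t M \<le> Lam * max_eig P) \<and>
     \<comment> \<open>concavity in M\<close>
     (\<forall>x t. (x, t) \<in> U \<longrightarrow> concave_on Sym (F x t)) \<and>
     \<comment> \<open>C^{1,alpha} in M\<close>
     (\<forall>x t. (x, t) \<in> U \<longrightarrow>
        (\<exists>DF C. (\<forall>M\<in>Sym. (F x t has_derivative DF M) (at M within Sym)) \<and>
           (\<forall>M\<in>Sym. \<forall>N\<in>Sym. onorm (\<lambda>H. DF M H - DF N H) \<le> C * norm (M - N) powr \<alpha>))) \<and>
     \<comment> \<open>C^{1,alpha}_loc in (x,t)\<close>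
     (\<forall>M\<in>Sym. \<exists>DF. (\<forall>p\<in>U. ((\<lambda>q. F (fst q) (snd q) M) has_derivative DF p) (at p)) \<and>
        (\<forall>K. compact K \<and> K \<subseteq> U \<longrightarrow>
           (\<exists>C. \<forall>p\<in>K. \<forall>q\<in>K. onorm (\<lambda>h. DF p h - DF q h) \<le> C * dist p q powr \<alpha>))) \<and>
     \<comment> \<open>F(x,t,0) = 0\<close>
     (\<forall>x t. (x, t) \<in> U \<longrightarrow> F x t 0 = 0)"

definition C21_near :: "('n::finite pt \<Rightarrow> real) \<Rightarrow> ('n pt \<Rightarrow> real ^ 'n) \<Rightarrow> ('n pt \<Rightarrow> 'n mat)
                        \<Rightarrow> ('n pt \<Rightarrow> real) \<Rightarrow> 'n pt \<Rightarrow> bool" where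
  "C21_near \<phi> Dx D2 Dt p0 \<longleftrightarrow>
     (\<exists>e>0. (\<forall>p\<in>ball p0 e.
         ((\<lambda>y. \<phi> (y, snd p)) has_derivative (\<lambda>h. Dx p \<bullet> h)) (at (fst p)) \<and>
         ((\<lambda>y. Dx (y, snd p)) has_derivative (\<lambda>h. D2 p *v h)) (at (fst p)) \<and>
         ((\<lambda>\<tau>. \<phi> (fst p, \<tau>)) has_real_derivative Dt p) (at (snd p))) \<and>
       continuous_on (ball p0 e) \<phi> \<and> continuous_on (ball p0 e) Dx \<and>
       continuous_on (ball p0 e) D2 \<and> continuous_on (ball p0 e) Dt)"

definition visc_sub :: "(real ^ 'n \<Rightarrow> real \<Rightarrow> 'n mat \<Rightarrow> real) \<Rightarrow> ('n::finite pt \<Rightarrow> real)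
                        \<Rightarrow> 'n pt set \<Rightarrow> ('n pt \<Rightarrow> real) \<Rightarrow> bool" where
  "visc_sub F f \<Omega> u \<longleftrightarrow>
     (\<forall>p0 \<phi> Dx D2 Dt. p0 \<in> \<Omega> \<and> C21_near \<phi> Dx D2 Dt p0 \<and>
        (\<exists>e>0. \<forall>p\<in>ball p0 e \<inter> \<Omega>. u p - \<phi> p \<le> u p0 - \<phi> p0) \<longrightarrow>
        F (fst p0) (snd p0) (D2 p0) - Dt p0 \<ge> f p0)"

definition visc_super :: "(real ^ 'n \<Rightarrow> real \<Rightarrow> 'n mat \<Rightarrow> real) \<Rightarrow> ('n::finite pt \<Rightarrow> real)
                        \<Rightarrow> 'n pt set \<Rightarrow> ('n pt \<Rightarrow> real) \<Rightarrow> bool" where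
  "visc_super F f \<Omega> u \<longleftrightarrow>
     (\<forall>p0 \<phi> Dx D2 Dt. p0 \<in> \<Omega> \<and> C21_near \<phi> Dx D2 Dt p0 \<and>
        (\<exists>e>0. \<forall>p\<in>ball p0 e \<inter> \<Omega>. u p - \<phi> p \<ge> u p0 - \<phi> p0) \<longrightarrow>
        F (fst p0) (snd p0) (D2 p0) - Dt p0 \<le> f p0)"

definition visc_sol :: "(real ^ 'n \<Rightarrow> real \<Rightarrow> 'n mat \<Rightarrow> real) \<Rightarrow> ('n::finite pt \<Rightarrow> real)
                        \<Rightarrow> 'n pt set \<Rightarrow> ('n pt \<Rightarrow> real) \<Rightarrow> bool" where
  "visc_sol F f \<Omega> u \<longleftrightarrow> continuous_on \<Omega> u \<and> visc_sub F f \<Omega> u \<and> visc_super F f \<Omega> u"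

end

theory Submission imports Defs begin

lemma mat_mulv: "(mat c :: real^'n::finite^'n) *v x = c *\<^sub>R x"
proof -
  have "\<And>i. (\<Sum>j\<in>UNIV. (if i = j then c else 0) * x $ j) = c * x $ i"
  proof -
    fix i :: 'n
    have "(\<Sum>j\<in>UNIV. (if i = j then c else 0) * x $ j) = (\<Sum>j\<in>UNIV. if i = j then c * x $ j else 0)"
      by (rule sum.cong) auto
    also have "\<dots> = c * x $ i" using sum.delta'[of UNIV i "\<lambda>j. c * x $ j"] by simp
    finally show "(\<Sum>j\<in>UNIV. (if i = j then c else 0) * x $ j) = c * x $ i" .
  qed
  then show ?thesis by (simp add: vec_eq_iff matrix_vector_mult_def mat_def)
qed

lemma max_eig_mat: "max_eig (mat c :: real^'n::finite^'n) = c"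
proof -
  obtain i :: 'n where True by simp
  have "{\<mu>. \<exists>v::real^'n. v \<noteq> 0 \<and> mat c *v v = \<mu> *\<^sub>R v} = {c}"
  proof
    show "{c} \<subseteq> {\<mu>. \<exists>v::real^'n. v \<noteq> 0 \<and> mat c *v v = \<mu> *\<^sub>R v}"
      using mat_mulv[of c "axis i 1"] by (auto intro!: exI[of _ "axis i 1"] simp: axis_eq_0_iff)
    show "{\<mu>. \<exists>v::real^'n. v \<noteq> 0 \<and> mat c *v v = \<mu> *\<^sub>R v} \<subseteq> {c}"
      by (auto simp: mat_mulv)
  qed
  then show ?thesis by (simp add: max_eig_def)
qed

lemma F_bound:
  fixes F :: "real^'n::finite \<Rightarrow> real \<Rightarrow> real^'n^'n \<Rightarrow> real"
  assumes "A1 Q1 lam Lam \<alpha> F" "(x, t) \<in> Q1" "0 \<le> c"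
  shows "F x t (mat c) \<le> Lam * c"
proof -
  have s: "(0::real^'n::finite^'n) \<in> Sym" unfolding Sym_def by (simp add: transpose_def vec_eq_iff)
  have n: "nonneg_def (mat c :: real^'n^'n)"
    using assms(3) by (simp add: nonneg_def_def Sym_def transpose_mat mat_mulv)
  have "F x t (0 + mat c) - F x t 0 \<le> Lam * max_eig (mat c :: real^'n^'n)"
  proof -
    have "\<forall>x t M P. (x, t) \<in> Q1 \<and> M \<in> Sym \<and> nonneg_def P \<longrightarrow>
        lam * max_eig P \<le> F x t (M + P) - F x t M \<and>
        F x t (M + P) - F x t M \<le> Lam * max_eig P"
      using assms(1) unfolding A1_def by (elim conjE) assumption
    from this[rule_format, of x t 0 "mat c"] show ?thesis using assms(2) s n by simp
  qed
  moreover have "F x t 0 = 0"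
  proof -
    have "\<forall>x t. (x, t) \<in> Q1 \<longrightarrow> F x t 0 = 0"
      using assms(1) unfolding A1_def by (elim conjE) assumption
    then show ?thesis using assms(2) by simp
  qed
  ultimately show ?thesis by (simp add: max_eig_mat)
qed


definition ccyl :: "real \<Rightarrow> 'n::finite pt \<Rightarrow> 'n pt set" where
  "ccyl r zs = cball (fst zs) r \<times> {snd zs - r^2 .. snd zs}"

lemma open_Q1: "open (Q1 :: 'n::finite pt set)"
  unfolding Q1_def Qcyl_def by (intro open_Times open_ball open_greaterThanLessThan)

lemma dot_dist: "(x - z) \<bullet> (x - z) = (dist z x)^2" for x z :: "real^'n::finite"
  by (simp add: dist_norm power2_norm_eq_inner norm_minus_commute)

lemma core:
  fixes F :: "real ^ 'n::finite \<Rightarrow> real \<Rightarrow> real ^ 'n ^ 'n \<Rightarrow> real"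
    and u f :: "(real ^ 'n) \<times> real \<Rightarrow> real"
  assumes A: "A1 Q1 lam Lam \<alpha> F" and uc: "continuous_on Q1 u"
    and sub: "visc_sub F f {p \<in> Q1. u p > 0} u"
    and fc: "\<forall>p \<in> {p \<in> Q1. u p > 0}. c0 \<le> f p"
    and mu: "0 < \<mu>" "2*\<mu>*Lam + \<mu> < c0"
    and p0: "u (z0,s0) > 0" "(z0,s0) \<in> Q1"
    and rho: "0 < \<rho>" "ccyl \<rho> (z0,s0) \<subseteq> Q1"
    and eta: "0 < \<eta>"
  shows "\<exists>q\<in>par_bdry \<rho> (z0,s0). u q \<ge> \<mu>*\<rho>^2 + u (z0,s0) - \<eta>"
proof -
  define \<Omega> where "\<Omega> = {p \<in> Q1. u p > 0}"
  define \<eta>' where "\<eta>' = min \<eta> (u (z0,s0) / 2)"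
  have e'pos: "0 < \<eta>'" using eta p0 by (simp add: \<eta>'_def)
  obtain d where d: "d > 0" "\<forall>x'\<in>Q1. dist x' (z0,s0) < d \<longrightarrow> dist (u x') (u (z0,s0)) < \<eta>'/2"
    using uc p0(2) e'pos unfolding continuous_on_iff by (meson half_gt_zero)
  obtain d' where d': "d' > 0" "ball (z0,s0) d' \<subseteq> Q1"
    using open_Q1 p0(2) by (meson openE)
  define \<tau> where "\<tau> = min (\<rho>^2/2) (min (\<eta>'/(4*\<mu>)) (min (d/2) (d'/2)))"
  have tpos: "0 < \<tau>" using rho mu e'pos d d' by (simp add: \<tau>_def)
  have t1: "\<tau> \<le> \<rho>^2/2" "\<tau> \<le> \<eta>'/(4*\<mu>)" "\<tau> \<le> d/2" "\<tau> \<le> d'/2"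
    by (simp_all add: \<tau>_def)
  have "\<mu>*\<tau> \<le> \<mu>*(\<eta>'/(4*\<mu>))" using t1(2) mu by (intro mult_left_mono) auto
  also have "\<dots> = \<eta>'/4" using mu by simp
  finally have tle2: "\<mu>*\<tau> \<le> \<eta>'/4" .
  have tle: "\<tau> < \<rho>^2" "\<mu>*\<tau> \<le> \<eta>'/4" "\<tau> < d" "\<tau> < d'"
    using t1 rho d d' tle2 tpos by auto
  define p' where "p' = (z0, s0 - \<tau>)"
  have dp': "dist p' (z0,s0) = \<tau>" using tpos by (simp add: p'_def dist_Pair_Pair dist_real_def)
  have p'Q: "p' \<in> Q1" using d' dp' tle by (auto simp: dist_commute)
  have up': "u p' > u (z0,s0) - \<eta>'/2"
  proof -
    have "dist (u p') (u (z0,s0)) < \<eta>'/2" using d(2) p'Q dp' tle by auto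
    then show ?thesis unfolding dist_real_def by linarith
  qed
  have up'pos: "u p' > 0" using up' p0 by (simp add: \<eta>'_def)
  define \<epsilon> where "\<epsilon> = \<tau>*\<eta>'/4"
  have epos: "\<epsilon> > 0" using tpos e'pos by (simp add: \<epsilon>_def)
  have compC: "compact (ccyl \<rho> (z0,s0))" unfolding ccyl_def
    by (simp add: compact_Times)
  have neC: "ccyl \<rho> (z0,s0) \<noteq> {}" using rho by (auto simp: ccyl_def)
  obtain xm where xm: "xm \<in> ccyl \<rho> (z0,s0)" "\<forall>y\<in>ccyl \<rho> (z0,s0). u y \<le> u xm"
    using continuous_attains_sup[OF compC neC continuous_on_subset[OF uc rho(2)]] by blast
  define B where "B = max 1 (u xm)"
  have Bpos: "B > 0" by (simp add: B_def)
  have uB: "\<And>y. y \<in> ccyl \<rho> (z0,s0) \<Longrightarrow> u y \<le> B" using xm by (force simp: B_def)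
  define \<delta> where "\<delta> = min \<tau> (\<epsilon>/B)"
  have dpos: "\<delta> > 0" using tpos epos Bpos by (simp add: \<delta>_def)
  have dle: "\<delta> \<le> \<tau>" "\<epsilon>/\<delta> \<ge> B"
    using epos Bpos dpos by (auto simp: \<delta>_def field_simps min_def)
  define K where "K = closure \<Omega> \<inter> (cball z0 \<rho> \<times> {s0-\<rho>^2..s0-\<delta>})"
  define h where "h = (\<lambda>p::'n pt. \<mu>*((fst p - z0) \<bullet> (fst p - z0) + (s0 - snd p)))"
  define G where "G = (\<lambda>p::'n pt. u p - h p - \<epsilon>/(s0 - snd p))"
  have KC: "K \<subseteq> ccyl \<rho> (z0,s0)" using dpos by (auto simp: K_def ccyl_def)
  have p'K: "p' \<in> K"
    using up'pos p'Q tle dle closure_subset[of \<Omega>] rho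
    by (auto simp: K_def p'_def \<Omega>_def)
  have compK: "compact K" unfolding K_def
    by (intro closed_Int_compact closed_closure compact_Times compact_cball compact_Icc)
  have contK: "continuous_on K G"
  proof -
    have "continuous_on K u" using continuous_on_subset[OF uc] KC rho by blast
    moreover have "\<forall>p\<in>K. s0 - snd p \<noteq> 0" using dpos by (auto simp: K_def)
    ultimately show ?thesis unfolding G_def h_def
      by (intro continuous_intros) auto
  qed
  obtain q where qK: "q \<in> K" and qmax: "\<forall>y\<in>K. G y \<le> G q"
    using continuous_attains_sup[OF compK _ contK] p'K by blast
  have Gp'2: "G p' \<ge> u (z0,s0) - \<eta>'"
  proof -
    have "G p' = u p' - \<mu>*\<tau> - \<eta>'/4"
      using tpos by (simp add: G_def h_def p'_def \<epsilon>_def)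
    then show ?thesis using up' tle(2) by linarith
  qed
  have Gp': "G p' > 0"
  proof -
    have "\<eta>' \<le> u (z0,s0)/2" by (simp add: \<eta>'_def)
    then show ?thesis using Gp'2 p0(1) by linarith
  qed
  have Gq: "G q \<ge> G p'" using qmax p'K by blast
  obtain xq tq where q: "q = (xq, tq)" by fastforce
  have qprops: "dist z0 xq \<le> \<rho>" "s0 - \<rho>^2 \<le> tq" "tq \<le> s0 - \<delta>" "q \<in> closure \<Omega>"
    using qK by (auto simp: K_def q)
  have qQ: "q \<in> Q1" using qK KC rho by blast
  have hnn: "\<And>p. snd p \<le> s0 \<Longrightarrow> h p \<ge> 0" using mu
    by (auto simp: h_def intro!: mult_nonneg_nonneg add_nonneg_nonneg)
  show ?thesis
  proof (cases "dist z0 xq = \<rho> \<or> tq = s0 - \<rho>^2")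
    case True
    have qpb: "q \<in> par_bdry \<rho> (z0,s0)"
      using True qprops dpos by (auto simp: par_bdry_def q)
    have hq: "h q \<ge> \<mu>*\<rho>^2"
    proof -
      have "(xq - z0) \<bullet> (xq - z0) + (s0 - tq) \<ge> \<rho>^2"
        using True qprops dpos by (auto simp: dot_dist)
      then show ?thesis using mu by (simp add: h_def q)
    qed
    have "\<epsilon>/(s0 - snd q) \<ge> 0" using epos qprops dpos by (simp add: q)
    then have "u q \<ge> G q + h q" by (simp add: G_def)
    moreover have "\<eta>' \<le> \<eta>" by (simp add: \<eta>'_def)
    ultimately show ?thesis using qpb hq Gq Gp'2 by (intro bexI[OF _ qpb]) linarith
  next
    case False
    then have inner: "dist z0 xq < \<rho>" "s0 - \<rho>^2 < tq" using qprops by auto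
    show ?thesis
    proof (cases "tq = s0 - \<delta>")
      case True
      have "u q \<le> B" using uB qK KC by blast
      moreover have "h q \<ge> 0" using hnn qprops dpos by (simp add: q)
      moreover have "\<epsilon>/(s0 - snd q) \<ge> B" using True dle by (simp add: q)
      ultimately have "G q \<le> 0" by (simp add: G_def)
      then show ?thesis using Gq Gp' by linarith
    next
      case False
      then have tqlt: "tq < s0 - \<delta>" using qprops by simp
      show ?thesis
      proof (cases "q \<in> \<Omega>")
        case False
        have "u q \<le> 0" using False qQ by (auto simp: \<Omega>_def)
        moreover have "u q \<ge> 0"
        proof -
          obtain g where g: "\<forall>n. g n \<in> \<Omega>" "g \<longlonglongrightarrow> q"
            using qprops(4) closure_sequential by blast
          have "(\<lambda>n. u (g n)) \<longlonglongrightarrow> u q"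
            by (rule continuous_on_tendsto_compose[OF uc g(2) qQ]) (use g(1) in \<open>auto simp: \<Omega>_def intro!: always_eventually\<close>)
          then show ?thesis
            by (rule LIMSEQ_le_const) (use g(1) in \<open>auto simp: \<Omega>_def less_imp_le intro!: exI[of _ 0]\<close>)
        qed
        moreover have "h q \<ge> 0" using hnn qprops dpos by (simp add: q)
        moreover have "\<epsilon>/(s0 - snd q) \<ge> 0" using epos qprops dpos by (simp add: q)
        ultimately have "G q \<le> 0" by (simp add: G_def)
        then show ?thesis using Gq Gp' by linarith
      next
        case True
        note qO = True
        define \<phi> where "\<phi> = (\<lambda>p::'n pt. h p + \<epsilon>/(s0 - snd p))"
        define Dx where "Dx = (\<lambda>p::'n pt. (2*\<mu>) *\<^sub>R (fst p - z0))"
        define D2 where "D2 = (\<lambda>p::'n pt. (mat (2*\<mu>) :: real^'n^'n))"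
        define Dt where "Dt = (\<lambda>p::'n pt. -\<mu> + \<epsilon>/(s0 - snd p)^2)"
        have C21: "C21_near \<phi> Dx D2 Dt q"
          unfolding C21_near_def
        proof (intro exI[of _ "s0 - tq"] conjI ballI)
          show "s0 - tq > 0" using tqlt dpos by simp
          have lt: "snd p < s0" if "p \<in> ball q (s0 - tq)" for p
          proof -
            have "dist (snd q) (snd p) < s0 - tq" using that dist_snd_le[of q p] by simp
            then show ?thesis by (simp add: q dist_real_def)
          qed
          have nz: "\<forall>p\<in>ball q (s0 - tq). s0 - snd p \<noteq> 0" using lt by fastforce
          fix p assume p: "p \<in> ball q (s0 - tq)"
          have nzp: "s0 - snd p \<noteq> 0" using lt[OF p] by simp
          show "((\<lambda>y. \<phi> (y, snd p)) has_derivative (\<lambda>h. Dx p \<bullet> h)) (at (fst p))"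
            unfolding \<phi>_def h_def Dx_def
            by (auto intro!: derivative_eq_intros ext simp: inner_commute algebra_simps)
          show "((\<lambda>y. Dx (y, snd p)) has_derivative (\<lambda>h. D2 p *v h)) (at (fst p))"
            unfolding D2_def Dx_def mat_mulv
            by (auto intro!: derivative_eq_intros ext simp: algebra_simps)
          show "((\<lambda>\<tau>. \<phi> (fst p, \<tau>)) has_real_derivative Dt p) (at (snd p))"
            unfolding \<phi>_def h_def Dt_def using nzp
            by (auto intro!: derivative_eq_intros simp: field_simps power2_eq_square)
        next
          have nz: "\<forall>p\<in>ball q (s0 - tq). s0 - snd p \<noteq> 0"
          proof
            fix p assume "p \<in> ball q (s0 - tq)"
            then have "dist (snd q) (snd p) < s0 - tq" using dist_snd_le[of q p] by simp
            then show "s0 - snd p \<noteq> 0" by (simp add: q dist_real_def)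
          qed
          show "continuous_on (ball q (s0 - tq)) \<phi>" unfolding \<phi>_def h_def
            using nz by (intro continuous_intros) auto
          show "continuous_on (ball q (s0 - tq)) Dx" unfolding Dx_def
            by (intro continuous_intros)
          show "continuous_on (ball q (s0 - tq)) D2" unfolding D2_def
            by (intro continuous_intros)
          show "continuous_on (ball q (s0 - tq)) Dt" unfolding Dt_def
            using nz by (intro continuous_intros) auto
        qed
        define e where "e = min (\<rho> - dist z0 xq) (min (tq - (s0-\<rho>^2)) (s0 - \<delta> - tq))"
        have loc: "\<exists>e>0. \<forall>p\<in>ball q e \<inter> \<Omega>. u p - \<phi> p \<le> u q - \<phi> q"
        proof (intro exI[of _ e] conjI ballI)
          show "e > 0" using inner tqlt by (simp add: e_def)
          fix p assume p: "p \<in> ball q e \<inter> \<Omega>"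
          have d1: "dist xq (fst p) < e" "dist tq (snd p) < e"
            using p dist_fst_le[of q p] dist_snd_le[of q p] by (auto simp: q)
          have "dist z0 (fst p) \<le> dist z0 xq + dist xq (fst p)" by (rule dist_triangle)
          then have "dist z0 (fst p) \<le> \<rho>" using d1 by (simp add: e_def)
          moreover have "s0 - \<rho>^2 \<le> snd p" "snd p \<le> s0 - \<delta>"
            using d1(2) by (auto simp: e_def dist_real_def)
          moreover have "p \<in> closure \<Omega>" using p closure_subset by blast
          ultimately have "p \<in> K" by (cases p) (auto simp: K_def)
          then have "G p \<le> G q" using qmax by blast
          then show "u p - \<phi> p \<le> u q - \<phi> q" by (simp add: G_def \<phi>_def)
        qed
        have "F (fst q) (snd q) (D2 q) - Dt q \<ge> f q"
          using sub C21 loc qO unfolding visc_sub_def \<Omega>_def by blast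
        moreover have "f q \<ge> c0" using fc qO unfolding \<Omega>_def by blast
        moreover have "F (fst q) (snd q) (D2 q) \<le> Lam * (2*\<mu>)"
          unfolding D2_def using F_bound[OF A, of xq tq "2*\<mu>"] qQ mu by (simp add: q)
        moreover have "Dt q \<ge> -\<mu>" using epos by (simp add: Dt_def)
        ultimately have "c0 \<le> 2*\<mu>*Lam + \<mu>" by (simp add: algebra_simps)
        then show ?thesis using mu by linarith
      qed
    qed
  qed
qed

lemma par_bdry_alt: "par_bdry r zs = sphere (fst zs) r \<times> {snd zs - r^2..snd zs} \<union> cball (fst zs) r \<times> {snd zs - r^2}"
  unfolding par_bdry_def by (auto simp: less_le)

lemma compact_par_bdry: "compact (par_bdry r (zs :: 'n::finite pt))"
  unfolding par_bdry_alt by (intro compact_Un compact_Times compact_sphere compact_Icc compact_cball) auto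

lemma par_sub_ccyl: "par_bdry r zs \<subseteq> ccyl r zs"
  unfolding par_bdry_def ccyl_def by auto

lemma transl_ccyl:
  fixes w p0 zs :: "'n::finite pt"
  assumes "w \<in> ccyl r p0" shows "w - (p0 - zs) \<in> ccyl r zs"
proof -
  obtain a b where w: "w = (a,b)" by fastforce
  obtain c d where p: "p0 = (c,d)" by fastforce
  obtain e g where z: "zs = (e,g)" by fastforce
  have "dist e (a - (c - e)) = dist c a" by (simp add: dist_norm algebra_simps)
  then show ?thesis using assms by (simp add: ccyl_def w p z)
qed

lemma transl_par:
  fixes w p0 zs :: "'n::finite pt"
  assumes "w \<in> par_bdry r p0" shows "w - (p0 - zs) \<in> par_bdry r zs"
proof -
  obtain a b where w: "w = (a,b)" by fastforce
  obtain c d where p: "p0 = (c,d)" by fastforce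
  obtain e g where z: "zs = (e,g)" by fastforce
  have "dist e (a - (c - e)) = dist c a" by (simp add: dist_norm algebra_simps)
  then show ?thesis using assms by (auto simp: par_bdry_def w p z)
qed

theorem lemma6p1:
  fixes F :: "real ^ 'n::finite \<Rightarrow> real \<Rightarrow> real ^ 'n ^ 'n \<Rightarrow> real"
    and u f :: "(real ^ 'n) \<times> real \<Rightarrow> real"
    and lam Lam \<alpha> c0 r :: real and z :: "real ^ 'n" and s :: real
  assumes "A1 Q1 lam Lam \<alpha> F"
    and "continuous_on Q1 u"
    and "visc_sol F f {p \<in> Q1. u p > 0} u"
    and "0 < c0" and "\<forall>p \<in> {p \<in> Q1. u p > 0}. c0 \<le> f p"
    and "(z, s) \<in> closure {p \<in> Q1. u p > 0}"
    and "0 < r" and "Qcyl r (z, s) \<subseteq> Q1"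
    and "par_bdry r (z, s) \<subseteq> Q1"
  shows "Sup (u ` par_bdry r (z, s))
           \<ge> min (c0 / 2) (c0 / (4 * real CARD('n) * Lam)) * r^2 + u (z, s)"
proof -
  note A = assms(1) and uc = assms(2)
  have sub: "visc_sub F f {p \<in> Q1. u p > 0} u" using assms(3) by (simp add: visc_sol_def)
  define \<Omega> where "\<Omega> = {p \<in> Q1. u p > 0}"
  have Lpos: "0 < Lam" using A unfolding A1_def by linarith
  have n1: "real CARD('n) \<ge> 1"
  proof -
    have c: "0 < CARD('n)" by (simp add: card_gt_0_iff)
    then show ?thesis by simp
  qed
  define \<mu>0 where "\<mu>0 = min (c0 / 2) (c0 / (4 * real CARD('n) * Lam))"
  have m0pos: "\<mu>0 > 0" using assms(4) Lpos n1 by (simp add: \<mu>0_def)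
  have CCQ: "ccyl r (z,s) \<subseteq> Q1"
  proof
    fix w assume w: "w \<in> ccyl r (z,s)"
    obtain x t where wx: "w = (x,t)" by fastforce
    show "w \<in> Q1"
    proof (cases "dist z x < r \<and> s - r^2 < t")
      case True
      then have "w \<in> Qcyl r (z,s)" using w assms(7) by (auto simp: wx ccyl_def Qcyl_def)
      then show ?thesis using assms(8) by blast
    next
      case False
      then have "w \<in> par_bdry r (z,s)" using w by (auto simp: wx ccyl_def par_bdry_def)
      then show ?thesis using assms(9) by blast
    qed
  qed
  have bdd: "bdd_above (u ` par_bdry r (z, s))"
    using compact_par_bdry[of r "(z,s)"] continuous_on_subset[OF uc assms(9)]
    by (intro bounded_imp_bdd_above compact_imp_bounded compact_continuous_image)
  have key: "\<exists>q\<in>par_bdry r (z,s). u q \<ge> \<mu>0*r^2 + u (z,s) - \<eta>" if eta: "\<eta> > 0" for \<eta>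
  proof -
    define \<mu> where "\<mu> = \<mu>0 - min (\<mu>0/2) (\<eta>/(2*r^2))"
    have mpos: "0 < \<mu>" "\<mu> < \<mu>0" using m0pos eta assms(7) by (auto simp: \<mu>_def min_def)
    have mdiff: "\<mu>0*r^2 - \<mu>*r^2 \<le> \<eta>/2"
    proof -
      have "\<mu>0*r^2 - \<mu>*r^2 = min (\<mu>0/2) (\<eta>/(2*r^2)) * r^2" by (simp add: \<mu>_def algebra_simps)
      also have "\<dots> \<le> (\<eta>/(2*r^2)) * r^2" using assms(7) by (intro mult_right_mono) auto
      also have "\<dots> = \<eta>/2" using assms(7) by simp
      finally show ?thesis .
    qed
    have mc: "2*\<mu>*Lam + \<mu> < c0"
    proof -
      have a: "\<mu> < c0/2" using mpos by (simp add: \<mu>0_def)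
      have "\<mu> < c0 / (4 * real CARD('n) * Lam)" using mpos by (simp add: \<mu>0_def)
      then have b: "\<mu> * (4 * real CARD('n) * Lam) < c0" using Lpos n1 by (simp add: less_divide_eq)
      have "2*\<mu>*Lam \<le> 2*\<mu>*Lam * real CARD('n)" using n1 mpos Lpos by simp
      then show ?thesis using a b by (simp add: algebra_simps)
    qed
    obtain d0 where d0: "d0 > 0" "\<And>x. x \<in> ccyl r (z,s) \<Longrightarrow> \<exists>G\<in>{Q1}. ball x d0 \<subseteq> G"
      using Heine_Borel_lemma[of "ccyl r (z,s)" "{Q1}"] CCQ open_Q1
      by (auto simp: ccyl_def compact_Times)
    define KK where "KK = {x + y |x y. x \<in> ccyl r (z,s) \<and> y \<in> cball (0::'n pt) (d0/2)}"
    have compKK: "compact KK" unfolding KK_def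
      by (intro compact_sums) (auto simp: ccyl_def compact_Times)
    have KKQ: "KK \<subseteq> Q1"
    proof
      fix w assume "w \<in> KK"
      then obtain x y where w: "w = x + y" "x \<in> ccyl r (z,s)" "y \<in> cball 0 (d0/2)" by (auto simp: KK_def)
      have "dist x w < d0" using w d0(1) by (simp add: dist_norm)
      then show "w \<in> Q1" using d0(2)[OF w(2)] by auto
    qed
    have inKK: "x + y \<in> KK" if "x \<in> ccyl r (z,s)" "norm y \<le> d0/2" for x y
      unfolding KK_def using that by (intro CollectI exI[of _ x] exI[of _ y]) simp
    have CKK: "ccyl r (z,s) \<subseteq> KK"
    proof
      fix x assume "x \<in> ccyl r (z,s)"
      then show "x \<in> KK" using inKK[of x 0] d0 by simp
    qed
    have e8: "\<eta>/8 > 0" using eta by simp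
    have "uniformly_continuous_on KK u"
      by (rule compact_uniformly_continuous[OF continuous_on_subset[OF uc KKQ] compKK])
    then have "\<exists>d>0. \<forall>x\<in>KK. \<forall>x'\<in>KK. dist x' x < d \<longrightarrow> dist (u x') (u x) < \<eta>/8"
      unfolding uniformly_continuous_on_def using e8 by blast
    then obtain d1 where d1: "d1 > 0" "\<forall>x\<in>KK. \<forall>x'\<in>KK. dist x' x < d1 \<longrightarrow> dist (u x') (u x) < \<eta>/8"
      by blast
    have "min (d0/2) d1 > 0" using d0 d1 by simp
    obtain p0 where p0: "p0 \<in> \<Omega>" "dist p0 (z,s) < min (d0/2) d1"
      using assms(6) \<open>min (d0/2) d1 > 0\<close> unfolding closure_approachable \<Omega>_def by blast
    define v where "v = p0 - (z,s)"
    have nv: "norm v < d0/2" "norm v < d1" using p0 by (simp_all add: v_def dist_norm)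
    have zsC: "(z,s) \<in> ccyl r (z,s)" using assms(7) by (simp add: ccyl_def)
    have CpK: "ccyl r p0 \<subseteq> Q1"
    proof
      fix w assume "w \<in> ccyl r p0"
      then have "w - v \<in> ccyl r (z,s)" unfolding v_def by (rule transl_ccyl)
      then have "(w - v) + v \<in> KK" using nv by (intro inKK) auto
      then show "w \<in> Q1" using KKQ by auto
    qed
    obtain z0 s0 where p0e: "p0 = (z0,s0)" by fastforce
    have p0Q: "(z0,s0) \<in> Q1" "u (z0,s0) > 0" using p0 by (auto simp: \<Omega>_def p0e)
    obtain q' where q': "q' \<in> par_bdry r (z0,s0)" "u q' \<ge> \<mu>*r^2 + u (z0,s0) - \<eta>/8"
      using core[OF A uc sub assms(5) mpos(1) mc p0Q(2) p0Q(1) assms(7) CpK[unfolded p0e] e8]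
      by blast
    define q where "q = q' - v"
    have qpb: "q \<in> par_bdry r (z,s)" unfolding q_def v_def p0e using q'(1) by (rule transl_par)
    have qK: "q \<in> KK" using qpb par_sub_ccyl CKK by blast
    have "q + v \<in> KK" using qpb par_sub_ccyl nv by (intro inKK) auto
    then have q'K: "q' \<in> KK" by (simp add: q_def)
    have "dist q' q < d1" using nv by (simp add: q_def dist_norm)
    then have "dist (u q') (u q) < \<eta>/8" using d1(2) qK q'K by blast
    then have c1: "u q > u q' - \<eta>/8" unfolding dist_real_def by linarith
    have p0K: "p0 \<in> KK" using inKK[OF zsC, of v] nv by (simp add: v_def)
    have "dist p0 (z,s) < d1" using p0 by simp
    moreover have "(z,s) \<in> KK" using CKK zsC by blast
    ultimately have "dist (u p0) (u (z,s)) < \<eta>/8" using d1(2) p0K by blast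
    then have c2: "u p0 > u (z,s) - \<eta>/8" unfolding dist_real_def by linarith
    show ?thesis using qpb c1 c2 q'(2) mdiff eta p0e by (intro bexI[OF _ qpb]) simp
  qed
  have "\<mu>0*r^2 + u (z,s) \<le> Sup (u ` par_bdry r (z, s)) + \<eta>" if eta2: "\<eta> > 0" for \<eta>
  proof -
    obtain q where "q \<in> par_bdry r (z,s)" "u q \<ge> \<mu>0*r^2 + u (z,s) - \<eta>" using key[OF eta2] by blast
    moreover then have "u q \<le> Sup (u ` par_bdry r (z, s))" using bdd by (intro cSup_upper) auto
    ultimately show ?thesis by linarith
  qed
  then show ?thesis unfolding \<mu>0_def[symmetric] by (rule field_le_epsilon)
qed

end
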